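(* Let $g\in G\setminus\{0\}$, $e\in E_N$, and $\sigma\in\Sigma_{E_N}$ be such that $(d\sigma)_p-\sigma_e=g$ for all $p\in\hat\partial e$, and assume $\partial\hat\partial\partial\hat\partial e\subseteq E_N$. Then either $|(\mathrm{supp}\,\sigma)^+|\ge7$, or $|(\mathrm{supp}\,\sigma)^+|=6$ and $|(\mathrm{supp}\,d\sigma)^+|\ge12$.
   Context: Work on $\mathbb Z^4$; oriented edges come in pairs $e,-e$; $dx_j=(x,x+\mathbf e_j)$ positively oriented. For $p=dx_{j_1}\wedge dx_{j_2}$ ($j_1<j_2$), $\partial p=\{dx_{j_1},d(x+\mathbf e_{j_1})_{j_2},-d(x+\mathbf e_{j_2})_{j_1},-dx_{j_2}\}$, $\partial(-p)=-\partial p$ (positive plaquettes are the $dx_{j_1}\wedge dx_{j_2}$). $\hat\partial e=\{p:e\in\partial p\}$; for sets $\partial A=\bigcup_{p\in A}\partial p$, $\hat\partial B=\bigcup_{e\in B}\hat\partial e$. $B_N=[-N,N]^4\cap\mathbb Z^4$; $E_N,P_N$ the oriented edges/plaquettes with all vertices in $B_N$. $G=\mathbb Z_n$. $\Sigma_{E_N}$: maps $\sigma:E_N\to G$ with $\sigma_{-e}=-\sigma_e$; $(d\sigma)_p=\sum_{e\in\partial p}\sigma_e$. $\mathrm{supp}$ denotes support and $(\cdot)^+$ the positively oriented elements. *)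

theory Defs
  imports Main
begin

text \<open>Lattice Z^4: vertices are maps nat => int vanishing outside the coordinates 0..3.
  Directions j are 0..3 (standing for e_1..e_4).\<close>

type_synonym vtx = "nat \<Rightarrow> int"

definition Z4 :: "vtx set" where
  "Z4 = {x. \<forall>j\<ge>4. x j = 0}"

definition shift :: "vtx \<Rightarrow> nat \<Rightarrow> vtx" where
  "shift x j = x(j := x j + 1)"

definition box :: "nat \<Rightarrow> vtx set" where
  "box N = {x \<in> Z4. \<forall>j<4. \<bar>x j\<bar> \<le> int N}"

text \<open>Oriented edge (x, j, s): s = True is dx_j = (x, x+e_j); s = False is -dx_j.\<close>
type_synonym edge = "vtx \<times> nat \<times> bool"

definition is_edge :: "edge \<Rightarrow> bool" where
  "is_edge e = (case e of (x, j, s) \<Rightarrow> x \<in> Z4 \<and> j < 4)"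

definition eneg :: "edge \<Rightarrow> edge" where
  "eneg e = (case e of (x, j, s) \<Rightarrow> (x, j, \<not> s))"

definition epos :: "edge \<Rightarrow> bool" where
  "epos e = (case e of (x, j, s) \<Rightarrow> s)"

definition evertices :: "edge \<Rightarrow> vtx set" where
  "evertices e = (case e of (x, j, s) \<Rightarrow> {x, shift x j})"

definition E :: "nat \<Rightarrow> edge set" where
  "E N = {e. is_edge e \<and> evertices e \<subseteq> box N}"

text \<open>Oriented plaquette (x, j1, j2, s) with j1 < j2: s = True is dx_j1 \<and> dx_j2,
  s = False its negative.\<close>
type_synonym plaq = "vtx \<times> nat \<times> nat \<times> bool"

definition is_plaq :: "plaq \<Rightarrow> bool" where
  "is_plaq p = (case p of (x, j1, j2, s) \<Rightarrow> x \<in> Z4 \<and> j1 < j2 \<and> j2 < 4)"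

definition ppos :: "plaq \<Rightarrow> bool" where
  "ppos p = (case p of (x, j1, j2, s) \<Rightarrow> s)"

definition pvertices :: "plaq \<Rightarrow> vtx set" where
  "pvertices p = (case p of (x, j1, j2, s) \<Rightarrow>
      {x, shift x j1, shift x j2, shift (shift x j1) j2})"

definition P :: "nat \<Rightarrow> plaq set" where
  "P N = {p. is_plaq p \<and> pvertices p \<subseteq> box N}"

definition bdry :: "plaq \<Rightarrow> edge set" where
  "bdry p = (case p of (x, j1, j2, s) \<Rightarrow>
     (if s then {(x, j1, True), (shift x j1, j2, True), (shift x j2, j1, False), (x, j2, False)}
      else eneg ` {(x, j1, True), (shift x j1, j2, True), (shift x j2, j1, False), (x, j2, False)}))"

definition cobdry :: "edge \<Rightarrow> plaq set" where
  "cobdry e = {p. is_plaq p \<and> e \<in> bdry p}"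

definition bdry_set :: "plaq set \<Rightarrow> edge set" where
  "bdry_set A = (\<Union>p\<in>A. bdry p)"

definition cobdry_set :: "edge set \<Rightarrow> plaq set" where
  "cobdry_set B = (\<Union>e\<in>B. cobdry e)"

text \<open>G = Z_n is represented by {0..<n} with arithmetic mod n.
  sigma is in Sigma_{E_N} iff it takes values in Z_n on E_N and sigma(-e) = -sigma(e).\<close>

definition Sigma :: "int \<Rightarrow> nat \<Rightarrow> (edge \<Rightarrow> int) set" where
  "Sigma n N = {\<sigma>. \<forall>e\<in>E N. \<sigma> e \<in> {0..<n} \<and> \<sigma> (eneg e) = (- \<sigma> e) mod n}"

definition dsig :: "int \<Rightarrow> (edge \<Rightarrow> int) \<Rightarrow> plaq \<Rightarrow> int" where
  "dsig n \<sigma> p = (\<Sum>e\<in>bdry p. \<sigma> e) mod n"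

end

theory Submission
  imports Defs
begin

definition und :: "edge \<Rightarrow> edge" where "und f = (case f of (y,k,s) \<Rightarrow> (y,k,True))"
definition pp :: "plaq \<Rightarrow> plaq" where "pp p = (case p of (z,a,b,s) \<Rightarrow> (z,a,b,True))"
definition sq :: "vtx \<Rightarrow> nat \<Rightarrow> nat \<Rightarrow> plaq" where "sq z a b = (z, min a b, max a b, True)"
definition mv :: "vtx \<Rightarrow> nat \<Rightarrow> int \<Rightarrow> vtx" where "mv x m c = x(m := x m + c)"

lemma shift_ne[simp]: "shift x k \<noteq> x" "x \<noteq> shift x k"
  by (auto simp: shift_def fun_upd_idem_iff dest: sym)

lemma und_simp[simp]: "und (y,k,s) = (y,k,True)" by (simp add: und_def)
lemma eneg_simp[simp]: "eneg (y,k,s) = (y,k,\<not>s)" by (simp add: eneg_def)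
lemma pp_simp[simp]: "pp (z,a,b,s) = (z,a,b,True)" by (simp add: pp_def)
lemma evertices_simp[simp]: "evertices (y,k,s) = {y, shift y k}" by (simp add: evertices_def)
lemma epos_simp[simp]: "epos (y,k,s) = s" by (simp add: epos_def)
lemma ppos_simp[simp]: "ppos (z,a,b,s) = s" by (simp add: ppos_def)
lemma und_eneg[simp]: "und (eneg f) = und f" by (cases f) auto
lemma eneg_eneg[simp]: "eneg (eneg f) = f" by (cases f) auto
lemma inj_eneg: "inj_on eneg A" by (metis eneg_eneg inj_on_inverseI)
lemma E_eneg: "f \<in> E N \<Longrightarrow> eneg f \<in> E N"
  by (cases f) (auto simp: E_def is_edge_def)
lemma E_und: "f \<in> E N \<Longrightarrow> und f \<in> E N"
  by (cases f) (auto simp: E_def is_edge_def)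
lemma und_cases: "und f = f \<or> f = eneg (und f)"
  by (cases f) auto
lemma und_eq: "und f' = und f \<Longrightarrow> f' = f \<or> f' = eneg f"
  by (cases f; cases f') auto

lemma bdry_T: "bdry (z,a,b,True) = {(z,a,True),(shift z a,b,True),(shift z b,a,False),(z,b,False)}"
  by (simp add: bdry_def)
lemma bdry_flip: "bdry (z,a,b,\<not>s) = eneg ` bdry (z,a,b,s)"
  by (cases s) (simp_all add: bdry_def image_image)
lemma bdry_F: "bdry (z,a,b,False) = eneg ` bdry (z,a,b,True)"
  using bdry_flip[of z a b True] by simp
lemma uedges: "und ` bdry (z,a,b,s) = {(z,a,True),(shift z a,b,True),(shift z b,a,True),(z,b,True)}"
  by (cases s) (simp_all add: bdry_def image_image)
lemma uedges_pp: "und ` bdry (pp p) = und ` bdry p"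
  by (cases p) (simp add: uedges)
lemma uedges_sq: "a \<noteq> b \<Longrightarrow> und ` bdry (sq z a b) = {(z,a,True),(shift z a,b,True),(shift z b,a,True),(z,b,True)}"
  by (cases "a < b") (auto simp: sq_def uedges min_def max_def)

lemma inj_und: assumes "is_plaq p" shows "inj_on und (bdry p)"
proof -
  obtain z a b s where p: "p = (z,a,b,s)" by (cases p) auto
  with assms have ab: "a \<noteq> b" by (simp add: is_plaq_def)
  have 1: "inj_on und (bdry (z,a,b,True))"
    using ab by (simp add: bdry_T inj_on_def) 
  show ?thesis
  proof (cases s)
    case True with 1 p show ?thesis by simp
  next
    case False
    have "inj_on und (eneg ` bdry (z,a,b,True))"
      using 1 by (auto simp: inj_on_def)
    with False p bdry_F show ?thesis by simp
  qed
qed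

lemma orient:
  assumes "is_plaq Q" "und f \<in> und ` bdry Q"
  obtains q where "pp q = pp Q" "is_plaq q" "f \<in> bdry q"
proof -
  obtain z a b s where Q: "Q = (z,a,b,s)" by (cases Q) auto
  obtain f' where f': "f' \<in> bdry Q" "und f' = und f" using assms(2) by auto
  from und_eq[OF f'(2)] show ?thesis
  proof
    assume "f' = f" then show ?thesis using that[of Q] f' assms by auto
  next
    assume "f' = eneg f"
    hence "f \<in> bdry (z,a,b,\<not>s)" using f' Q bdry_flip[of z a b s] by force
    moreover have "is_plaq (z,a,b,\<not>s)" using assms Q by (simp add: is_plaq_def)
    ultimately show ?thesis using that[of "(z,a,b,\<not>s)"] Q by auto
  qed
qed

lemma bdry_same_pp:
  assumes "pp q = pp q'" shows "bdry q = bdry q' \<or> bdry q = eneg ` bdry q'"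
proof -
  obtain z a b s where q: "q = (z,a,b,s)" by (cases q) auto
  obtain z' a' b' s' where q': "q' = (z',a',b',s')" by (cases q') auto
  from assms q q' have "z'=z" "a'=a" "b'=b" by auto
  then show ?thesis using q q' bdry_flip[of z a b s'] by (cases "s = s'") auto
qed

lemma bdry_E_pp:
  assumes "pp q = pp q'" "bdry q' \<subseteq> E N" shows "bdry q \<subseteq> E N"
proof
  fix f assume "f \<in> bdry q"
  with bdry_same_pp[OF assms(1)] consider "f \<in> bdry q'" | f' where "f' \<in> bdry q'" "f = eneg f'" by blast
  then show "f \<in> E N" using assms(2) E_eneg by cases auto
qed

lemma in_P: assumes "is_plaq p" "bdry p \<subseteq> E N" shows "p \<in> P N"
proof -
  obtain z a b s where p: "p = (z,a,b,s)" by (cases p) auto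
  have sub: "\<And>f. f \<in> bdry p \<Longrightarrow> evertices f \<subseteq> box N" using assms(2) by (auto simp: E_def)
  have "pvertices p \<subseteq> \<Union> (evertices ` bdry p)"
    using p by (cases s) (auto simp: pvertices_def bdry_def)
  have "pvertices p \<subseteq> box N"
  proof
    fix v assume "v \<in> pvertices p"
    then have "v \<in> \<Union> (evertices ` bdry p)" using \<open>pvertices p \<subseteq> _\<close> by (meson subsetD)
    then obtain f where "f \<in> bdry p" "v \<in> evertices f" by (rule UnionE) auto
    then show "v \<in> box N" using sub by (meson subsetD)
  qed
  with assms(1) show ?thesis by (auto simp: P_def)
qed


lemma sig_range: "\<sigma> \<in> Sigma n N \<Longrightarrow> f \<in> E N \<Longrightarrow> 0 \<le> \<sigma> f \<and> \<sigma> f < n"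
  by (auto simp: Sigma_def)
lemma sig_neg: "\<sigma> \<in> Sigma n N \<Longrightarrow> f \<in> E N \<Longrightarrow> \<sigma> (eneg f) = (- \<sigma> f) mod n"
  by (auto simp: Sigma_def)
lemma neg_mod_zero: "(0::int) \<le> a \<Longrightarrow> a < n \<Longrightarrow> ((-a) mod n = 0 \<longleftrightarrow> a = 0)"
  by (simp add: zmod_zminus1_eq_if mod_pos_pos_trivial)
lemma sig_und: assumes "\<sigma> \<in> Sigma n N" "f \<in> E N" shows "\<sigma> f = 0 \<longleftrightarrow> \<sigma> (und f) = 0"
  using und_cases[of f]
proof
  assume "und f = f" then show ?thesis by simp
next
  assume h: "f = eneg (und f)"
  have u: "und f \<in> E N" using assms(2) by (rule E_und)
  have "\<sigma> f = (- \<sigma> (und f)) mod n" using sig_neg[OF assms(1) u] h by metis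
  then show ?thesis using sig_range[OF assms(1) u] neg_mod_zero by simp
qed

lemma dsig_flip0:
  assumes "\<sigma> \<in> Sigma n N" "bdry q' \<subseteq> E N" "bdry q = eneg ` bdry q'"
  shows "dsig n \<sigma> q = 0 \<longleftrightarrow> dsig n \<sigma> q' = 0"
proof -
  have "sum \<sigma> (bdry q) = sum (\<sigma> \<circ> eneg) (bdry q')" using assms(3) inj_eneg by (simp add: sum.reindex)
  also have "\<dots> = (\<Sum>f\<in>bdry q'. (- \<sigma> f) mod n)" using sig_neg assms(1,2) by (intro sum.cong) auto
  finally have "dsig n \<sigma> q = (\<Sum>f\<in>bdry q'. - \<sigma> f) mod n" by (simp add: dsig_def mod_sum_eq)
  also have "\<dots> = (- sum \<sigma> (bdry q')) mod n" by (simp add: sum_negf)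
  finally show ?thesis by (simp add: dsig_def dvd_eq_mod_eq_0[symmetric])
qed

lemma dsig_pp: assumes "\<sigma> \<in> Sigma n N" "bdry p \<subseteq> E N"
  shows "dsig n \<sigma> (pp p) = 0 \<longleftrightarrow> dsig n \<sigma> p = 0"
proof -
  have "pp (pp p) = pp p" by (cases p) simp
  from bdry_same_pp[OF this] show ?thesis
  proof
    assume "bdry (pp p) = bdry p" then show ?thesis by (simp add: dsig_def)
  next
    assume "bdry (pp p) = eneg ` bdry p" then show ?thesis by (rule dsig_flip0[OF assms(1,2)])
  qed
qed

lemma finite_box: "finite (box N)"
proof -
  have "box N \<subseteq> {f. \<forall>x. (x \<in> {0..<4} \<longrightarrow> f x \<in> {-int N..int N}) \<and> (x \<notin> {0..<4} \<longrightarrow> f x = 0)}"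
    by (auto simp: box_def Z4_def abs_le_iff)
  then show ?thesis by (rule finite_subset) (rule finite_set_of_finite_funs; simp)
qed
lemma finite_E: "finite (E N)"
proof -
  have "E N \<subseteq> box N \<times> {0..<4} \<times> UNIV"
  proof
    fix f assume "f \<in> E N"
    moreover obtain a b c where "f = (a,b,c)" by (cases f) auto
    ultimately show "f \<in> box N \<times> {0..<4} \<times> UNIV" by (simp add: E_def is_edge_def)
  qed
  then show ?thesis by (rule finite_subset) (simp add: finite_box)
qed
lemma finite_P: "finite (P N)"
proof -
  have "P N \<subseteq> box N \<times> {0..<4} \<times> {0..<4} \<times> UNIV"
  proof
    fix f assume "f \<in> P N"
    moreover obtain a b c d where "f = (a,b,c,d)" by (cases f) auto
    ultimately show "f \<in> box N \<times> {0..<4} \<times> {0..<4} \<times> UNIV" by (simp add: P_def is_plaq_def pvertices_def)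
  qed
  then show ?thesis by (rule finite_subset) (simp add: finite_box)
qed

definition V0 :: "vtx \<Rightarrow> nat \<Rightarrow> vtx set" where
 "V0 x j = {v. v j - x j \<in> {0,1} \<and> (\<forall>i. i\<noteq>j \<longrightarrow> \<bar>v i - x i\<bar> \<le> 1) \<and>
    (\<forall>i i'. i\<noteq>j \<longrightarrow> i'\<noteq>j \<longrightarrow> i\<noteq>i' \<longrightarrow> v i \<noteq> x i \<longrightarrow> v i' = x i')}"
definition E0 :: "vtx \<Rightarrow> nat \<Rightarrow> edge set" where
  "E0 x j = {G. epos G \<and> is_edge G \<and> evertices G \<subseteq> V0 x j}"
definition SqV :: "vtx \<Rightarrow> nat \<Rightarrow> nat \<Rightarrow> int \<Rightarrow> vtx set" where
 "SqV x j m c = {v. (\<forall>i. i\<noteq>j \<longrightarrow> i\<noteq>m \<longrightarrow> v i = x i) \<and> v j - x j \<in> {0,1} \<and> v m - x m \<in> {0,c}}"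
definition base :: "vtx \<Rightarrow> nat \<Rightarrow> int \<Rightarrow> vtx" where "base x m c = (if c = 1 then x else mv x m (-1))"
definition P0 :: "vtx \<Rightarrow> nat \<Rightarrow> nat \<Rightarrow> int \<Rightarrow> plaq" where "P0 x j m c = sq (base x m c) j m"

lemma SqV_V0: assumes "m \<noteq> j" "c \<in> {1,-1}" shows "SqV x j m c \<subseteq> V0 x j"
  using assms by (auto simp: SqV_def V0_def)

lemma P0_vert: assumes "m\<noteq>j" "c\<in>{1,-1}" "G \<in> und ` bdry (P0 x j m c)" shows "evertices G \<subseteq> SqV x j m c"
  using assms by (auto simp: P0_def uedges_sq base_def mv_def shift_def SqV_def)

lemma P0_e: "m\<noteq>j \<Longrightarrow> c\<in>{1,-1} \<Longrightarrow> (x,j,True) \<in> und ` bdry (P0 x j m c)"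
  by (auto simp: P0_def uedges_sq base_def mv_def shift_def)

lemma P0_plaq: "x \<in> Z4 \<Longrightarrow> j<4 \<Longrightarrow> m<4 \<Longrightarrow> m\<noteq>j \<Longrightarrow> is_plaq (P0 x j m c)"
  by (auto simp: P0_def sq_def is_plaq_def base_def mv_def Z4_def)

lemma P0_pp: "pp (P0 x j m c) = P0 x j m c"
  by (simp add: P0_def sq_def)

lemma SqV_inter: assumes "m\<noteq>j" "m'\<noteq>j" "c\<in>{1,-1}" "c'\<in>{1,-1}" "(m,c) \<noteq> (m',c')"
  "evertices G \<subseteq> SqV x j m c" "evertices G \<subseteq> SqV x j m' c'" "epos G" shows "G = (x,j,True)"
proof -
  have key: "\<And>v. v \<in> SqV x j m c \<Longrightarrow> v \<in> SqV x j m' c' \<Longrightarrow> (\<forall>i. i\<noteq>j \<longrightarrow> v i = x i) \<and> v j - x j \<in> {0,1}"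
  proof -
    fix v assume v1: "v \<in> SqV x j m c" and v2: "v \<in> SqV x j m' c'"
    have "v i = x i" if "i \<noteq> j" for i
    proof (cases "i = m")
      case False then show ?thesis using v1 that unfolding SqV_def by blast
    next
      case True
      show ?thesis
      proof (cases "m = m'")
        case False then show ?thesis using v2 that True unfolding SqV_def by blast
      next
        case mm: True
        then have "c \<noteq> c'" using assms(5) by simp
        moreover have "v m - x m \<in> {0,c}" "v m' - x m' \<in> {0,c'}" using v1 v2 unfolding SqV_def by blast+
        ultimately show ?thesis using True mm assms(3,4) by auto
      qed
    qed
    moreover have "v j - x j \<in> {0,1}" using v1 unfolding SqV_def by blast
    ultimately show "(\<forall>i. i\<noteq>j \<longrightarrow> v i = x i) \<and> v j - x j \<in> {0,1}" by blast
  qed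
  obtain y k where G: "G = (y,k,True)" using assms(8) by (cases G) auto
  have y: "\<forall>i. i\<noteq>j \<longrightarrow> y i = x i" "y j - x j \<in> {0,1}" 
    using key assms(6,7) G by auto
  have sy: "\<forall>i. i\<noteq>j \<longrightarrow> shift y k i = x i" "shift y k j - x j \<in> {0,1}"
    using key assms(6,7) G by auto
  have kj: "k = j"
  proof (rule ccontr)
    assume "k\<noteq>j" then have "shift y k k = x k" "y k = x k" using y sy by auto
    then show False by (simp add: shift_def)
  qed
  then have "y j = x j" using y(2) sy(2) by (auto simp: shift_def)
  then have "y = x" using y(1) by (metis ext)
  then show ?thesis using G kj by simp
qed


lemma notV0_2: "i \<noteq> j \<Longrightarrow> \<bar>v i - x i\<bar> > 1 \<Longrightarrow> v \<notin> V0 x j"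
  unfolding V0_def by force
lemma notV0_j: "v j - x j \<notin> {0,1} \<Longrightarrow> v \<notin> V0 x j"
  unfolding V0_def by blast
lemma notE0: "w \<in> evertices G \<Longrightarrow> w \<notin> V0 x j \<Longrightarrow> G \<notin> E0 x j"
  unfolding E0_def by blast
lemma mv_Z4: "y \<in> Z4 \<Longrightarrow> m < 4 \<Longrightarrow> mv y m c \<in> Z4"
  by (simp add: Z4_def mv_def)
lemma shift_mv: "shift (mv y m (-1)) m = y"
  by (simp add: shift_def mv_def)
lemma sq_plaq: "y \<in> Z4 \<Longrightarrow> a < 4 \<Longrightarrow> b < 4 \<Longrightarrow> a \<noteq> b \<Longrightarrow> is_plaq (sq y a b) \<and> ppos (sq y a b)"
  by (simp add: sq_def is_plaq_def)

lemma Q_exists: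
  assumes "x \<in> Z4" "G \<in> E0 x j" "G \<noteq> (x,j,True)" and j4: "j < 4"
  shows "\<exists>Q. is_plaq Q \<and> ppos Q \<and> G \<in> und ` bdry Q \<and> (\<forall>G'\<in>und ` bdry Q. G' = G \<or> G' \<notin> E0 x j)"
proof -
  obtain y k where G: "G = (y,k,True)" "y \<in> Z4" "k < 4" "y \<in> V0 x j" "shift y k \<in> V0 x j"
    using assms(2) by (cases G) (auto simp: E0_def is_edge_def)
  show ?thesis
  proof (cases "k = j")
    case kj: True
    have "y j - x j \<in> {0,1}" "shift y k j - x j \<in> {0,1}" using G(4,5) unfolding V0_def by blast+
    then have yj: "y j = x j" using kj by (auto simp: shift_def)
    have "y \<noteq> x" using assms(3) G kj by auto
    then obtain m where m: "y m \<noteq> x m" by (auto simp: fun_eq_iff)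
    have mj: "m \<noteq> j" using m yj by auto
    have m4: "m < 4"
    proof (rule ccontr)
      assume "\<not> m < 4" then have "y m = 0" "x m = 0" using G(2) assms(1) by (auto simp: Z4_def)
      then show False using m by simp
    qed
    have "\<bar>y m - x m\<bar> \<le> 1" using G(4) mj unfolding V0_def by blast
    then have c: "y m - x m = 1 \<or> y m - x m = -1" using m by auto
    then show ?thesis
    proof
      assume c1: "y m - x m = 1"
      let ?Q = "sq y j m"
      have U: "und ` bdry ?Q = {(y,j,True),(shift y j,m,True),(shift y m,j,True),(y,m,True)}"
        using uedges_sq[of j m y] mj by simp
      have n1: "shift (shift y j) m \<notin> V0 x j" by (rule notV0_2[OF mj]) (use c1 mj in \<open>simp add: shift_def\<close>)
      have n2: "shift y m \<notin> V0 x j" by (rule notV0_2[OF mj]) (use c1 mj in \<open>simp add: shift_def\<close>)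
      have e1: "(shift y j,m,True) \<notin> E0 x j" by (rule notE0[OF _ n1]) simp
      have e2: "(shift y m,j,True) \<notin> E0 x j" by (rule notE0[OF _ n2]) simp
      have e3: "(y,m,True) \<notin> E0 x j" by (rule notE0[OF _ n2]) simp
      show ?thesis
      proof (intro exI conjI)
        show "is_plaq ?Q" using sq_plaq[OF G(2) j4 m4 mj[symmetric]] by blast
        show "ppos ?Q" using sq_plaq[OF G(2) j4 m4 mj[symmetric]] by blast
        show "G \<in> und ` bdry ?Q" using U G kj by simp
        show "\<forall>G'\<in>und ` bdry ?Q. G' = G \<or> G' \<notin> E0 x j" using U e1 e2 e3 G kj by simp
      qed
    next
      assume c1: "y m - x m = -1"
      define z where "z = mv y m (-1)"
      let ?Q = "sq z j m"
      have zZ: "z \<in> Z4" using mv_Z4[OF G(2) m4] z_def by simp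
      have sz: "shift z m = y" using shift_mv z_def by simp
      have U: "und ` bdry ?Q = {(z,j,True),(shift z j,m,True),(y,j,True),(z,m,True)}"
        using uedges_sq[OF mj[symmetric], of z] sz by simp
      have n1: "shift z j \<notin> V0 x j" by (rule notV0_2[OF mj]) (use c1 mj in \<open>simp add: shift_def z_def mv_def\<close>)
      have n2: "z \<notin> V0 x j" by (rule notV0_2[OF mj]) (use c1 mj in \<open>simp add: z_def mv_def\<close>)
      have e1: "(shift z j,m,True) \<notin> E0 x j" by (rule notE0[OF _ n1]) simp
      have e2: "(z,j,True) \<notin> E0 x j" by (rule notE0[OF _ n2]) simp
      have e3: "(z,m,True) \<notin> E0 x j" by (rule notE0[OF _ n2]) simp
      show ?thesis
      proof (intro exI conjI)
        show "is_plaq ?Q" using sq_plaq[OF zZ j4 m4 mj[symmetric]] by blast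
        show "ppos ?Q" using sq_plaq[OF zZ j4 m4 mj[symmetric]] by blast
        show "G \<in> und ` bdry ?Q" using U G kj by simp
        show "\<forall>G'\<in>und ` bdry ?Q. G' = G \<or> G' \<notin> E0 x j" using U e1 e2 e3 G kj by simp
      qed
    qed
  next
    case kj: False
    have "y j - x j \<in> {0,1}" using G(4) unfolding V0_def by blast
    then have "y j - x j = 1 \<or> y j - x j = 0" by auto
    then show ?thesis
    proof
      assume c1: "y j - x j = 1"
      let ?Q = "sq y k j"
      have U: "und ` bdry ?Q = {(y,k,True),(shift y k,j,True),(shift y j,k,True),(y,j,True)}"
        using uedges_sq[of k j y] kj by simp
      have n1: "shift (shift y k) j \<notin> V0 x j" by (rule notV0_j) (use c1 kj in \<open>simp add: shift_def\<close>)
      have n2: "shift y j \<notin> V0 x j" by (rule notV0_j) (use c1 kj in \<open>simp add: shift_def\<close>)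
      have e1: "(shift y k,j,True) \<notin> E0 x j" by (rule notE0[OF _ n1]) simp
      have e2: "(shift y j,k,True) \<notin> E0 x j" by (rule notE0[OF _ n2]) simp
      have e3: "(y,j,True) \<notin> E0 x j" by (rule notE0[OF _ n2]) simp
      show ?thesis
      proof (intro exI conjI)
        show "is_plaq ?Q" using sq_plaq[OF G(2) G(3) j4 kj] by blast
        show "ppos ?Q" using sq_plaq[OF G(2) G(3) j4 kj] by blast
        show "G \<in> und ` bdry ?Q" using U G by simp
        show "\<forall>G'\<in>und ` bdry ?Q. G' = G \<or> G' \<notin> E0 x j" using U e1 e2 e3 G by simp
      qed
    next
      assume c1: "y j - x j = 0"
      define z where "z = mv y j (-1)"
      let ?Q = "sq z k j"
      have zZ: "z \<in> Z4" using mv_Z4[OF G(2) j4] z_def by simp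
      have sz: "shift z j = y" using shift_mv z_def by simp
      have U: "und ` bdry ?Q = {(z,k,True),(shift z k,j,True),(y,k,True),(z,j,True)}"
        using uedges_sq[OF kj, of z] sz by simp
      have n1: "shift z k \<notin> V0 x j" by (rule notV0_j) (use c1 kj in \<open>simp add: shift_def z_def mv_def\<close>)
      have n2: "z \<notin> V0 x j" by (rule notV0_j) (use c1 in \<open>simp add: z_def mv_def\<close>)
      have e1: "(shift z k,j,True) \<notin> E0 x j" by (rule notE0[OF _ n1]) simp
      have e2: "(z,k,True) \<notin> E0 x j" by (rule notE0[OF _ n2]) simp
      have e3: "(z,j,True) \<notin> E0 x j" by (rule notE0[OF _ n2]) simp
      show ?thesis
      proof (intro exI conjI)
        show "is_plaq ?Q" using sq_plaq[OF zZ G(3) j4 kj] by blast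
        show "ppos ?Q" using sq_plaq[OF zZ G(3) j4 kj] by blast
        show "G \<in> und ` bdry ?Q" using U G by simp
        show "\<forall>G'\<in>und ` bdry ?Q. G' = G \<or> G' \<notin> E0 x j" using U e1 e2 e3 G by simp
      qed
    qed
  qed
qed


theorem mainTheorem6:
  fixes n :: int and N :: nat and g :: int and e :: edge and \<sigma> :: "edge \<Rightarrow> int"
  assumes "g \<in> {0..<n}" and "g \<noteq> 0"
    and "e \<in> E N"
    and "\<sigma> \<in> Sigma n N"
    and "\<forall>p\<in>cobdry e. (dsig n \<sigma> p - \<sigma> e) mod n = g"
    and "bdry_set (cobdry_set (bdry_set (cobdry e))) \<subseteq> E N"
  shows "card {f \<in> E N. epos f \<and> \<sigma> f \<noteq> 0} \<ge> 7 \<or>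
         (card {f \<in> E N. epos f \<and> \<sigma> f \<noteq> 0} = 6 \<and>
          card {p \<in> P N. ppos p \<and> dsig n \<sigma> p \<noteq> 0} \<ge> 12)"
proof -
  note sig = assms(4)
  obtain x j s0 where e: "e = (x,j,s0)" by (cases e) auto
  have xZ: "x \<in> Z4" and j4: "j < 4" using assms(3) e by (auto simp: E_def is_edge_def)
  define ue where "ue = (x,j,True)"
  have ue: "und e = ue" using e ue_def by simp
  define S where "S = {f \<in> E N. epos f \<and> \<sigma> f \<noteq> 0}"
  define T where "T = {p \<in> P N. ppos p \<and> dsig n \<sigma> p \<noteq> 0}"
  have finS: "finite S" using finite_E[of N] unfolding S_def by simp
  have finT: "finite T" using finite_P[of N] unfolding T_def by simp
  define I where "I = ({0..<4} - {j}) \<times> {1::int, -1}"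
  have c3: "card ({0..<(4::nat)} - {j}) = 3" using j4 by (simp add: card_Diff_singleton)
  have cardI: "card I = 6" unfolding I_def card_cartesian_product c3 by simp
  have finI: "finite I" unfolding I_def by simp
  have Ip: "fst mc < 4 \<and> fst mc \<noteq> j \<and> snd mc \<in> {1,-1}" if "mc \<in> I" for mc
    using that unfolding I_def by auto
  have cobE: "bdry q \<subseteq> E N" if "q \<in> cobdry e" for q
  proof
    fix f assume f: "f \<in> bdry q"
    have "e \<in> bdry q" using that by (simp add: cobdry_def)
    then have "e \<in> bdry_set (cobdry e)" using that unfolding bdry_set_def by blast
    moreover have "q \<in> cobdry e" by fact
    ultimately have "q \<in> cobdry_set (bdry_set (cobdry e))" unfolding cobdry_set_def by blast
    then have "f \<in> bdry_set (cobdry_set (bdry_set (cobdry e)))" using f unfolding bdry_set_def by blast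
    then show "f \<in> E N" using assms(6) by blast
  qed
  have cob2E: "bdry q \<subseteq> E N" if "p \<in> cobdry e" "f \<in> bdry p" "is_plaq q" "f \<in> bdry q" for p f q
  proof
    fix f' assume f': "f' \<in> bdry q"
    have "f \<in> bdry_set (cobdry e)" using that unfolding bdry_set_def by blast
    moreover have "q \<in> cobdry f" using that by (simp add: cobdry_def)
    ultimately have "q \<in> cobdry_set (bdry_set (cobdry e))" unfolding cobdry_set_def by blast
    then have "f' \<in> bdry_set (cobdry_set (bdry_set (cobdry e)))" using f' unfolding bdry_set_def by blast
    then show "f' \<in> E N" using assms(6) by blast
  qed
  have ex_p: "\<exists>p. pp p = P0 x j (fst mc) (snd mc) \<and> is_plaq p \<and> e \<in> bdry p" if "mc \<in> I" for mc
  proof -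
    have pl: "is_plaq (P0 x j (fst mc) (snd mc))" using P0_plaq[OF xZ j4] Ip[OF that] by blast
    have "und e \<in> und ` bdry (P0 x j (fst mc) (snd mc))" using P0_e Ip[OF that] ue ue_def by simp
    from orient[OF pl this] obtain q where "pp q = pp (P0 x j (fst mc) (snd mc))" "is_plaq q" "e \<in> bdry q" by blast
    then show ?thesis using P0_pp by metis
  qed
  then obtain pf where pf: "\<And>mc. mc \<in> I \<Longrightarrow> pp (pf mc) = P0 x j (fst mc) (snd mc) \<and> is_plaq (pf mc) \<and> e \<in> bdry (pf mc)"
    by metis
  have pf_cob: "pf mc \<in> cobdry e" if "mc \<in> I" for mc using pf[OF that] by (simp add: cobdry_def)
  have pf_E: "bdry (pf mc) \<subseteq> E N" if "mc \<in> I" for mc using cobE pf_cob that by blast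
  have ex_f: "\<exists>f\<in>bdry (pf mc). f \<noteq> e \<and> \<sigma> f \<noteq> 0" if "mc \<in> I" for mc
  proof (rule ccontr)
    assume "\<not> ?thesis"
    then have z: "\<forall>f\<in>bdry (pf mc) - {e}. \<sigma> f = 0" by blast
    have fin: "finite (bdry (pf mc))" by (cases "pf mc") (auto simp: bdry_def)
    have "sum \<sigma> (bdry (pf mc)) = \<sigma> e + sum \<sigma> (bdry (pf mc) - {e})"
      using sum.remove[OF fin] pf[OF that] by blast
    also have "sum \<sigma> (bdry (pf mc) - {e}) = 0" using z by simp
    finally have "dsig n \<sigma> (pf mc) = \<sigma> e mod n" by (simp add: dsig_def)
    then have "(dsig n \<sigma> (pf mc) - \<sigma> e) mod n = 0" by (simp add: mod_diff_left_eq)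
    moreover have "(dsig n \<sigma> (pf mc) - \<sigma> e) mod n = g" using assms(5) pf_cob[OF that] by blast
    ultimately show False using assms(2) by simp
  qed
  then obtain ff where ff: "\<And>mc. mc \<in> I \<Longrightarrow> ff mc \<in> bdry (pf mc) \<and> ff mc \<noteq> e \<and> \<sigma> (ff mc) \<noteq> 0"
    by metis
  define F where "F mc = und (ff mc)" for mc
  have ffE: "ff mc \<in> E N" if "mc \<in> I" for mc using ff[OF that] pf_E[OF that] by blast
  have FS: "F mc \<in> S" if "mc \<in> I" for mc
  proof -
    have "F mc \<in> E N" unfolding F_def by (rule E_und[OF ffE[OF that]])
    moreover have "\<sigma> (F mc) \<noteq> 0" unfolding F_def using sig_und[OF sig ffE[OF that]] ff[OF that] by simp
    moreover have "epos (F mc)" unfolding F_def by (cases "ff mc") simp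
    ultimately show ?thesis unfolding S_def by simp
  qed
  have Fne: "F mc \<noteq> ue" if "mc \<in> I" for mc
  proof
    assume "F mc = ue"
    then have "und (ff mc) = und e" using ue F_def by simp
    moreover have "inj_on und (bdry (pf mc))" using inj_und pf[OF that] by blast
    ultimately have "ff mc = e" using ff[OF that] pf[OF that] unfolding inj_on_def by blast
    then show False using ff[OF that] by blast
  qed
  have FU: "F mc \<in> und ` bdry (P0 x j (fst mc) (snd mc))" if "mc \<in> I" for mc
  proof -
    have "F mc \<in> und ` bdry (pf mc)" unfolding F_def using ff[OF that] by blast
    then show ?thesis using uedges_pp[of "pf mc"] pf[OF that] by simp
  qed
  have FV: "evertices (F mc) \<subseteq> SqV x j (fst mc) (snd mc)" if "mc \<in> I" for mc
    using P0_vert[OF _ _ FU[OF that]] Ip[OF that] by blast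
  have FE0: "F mc \<in> E0 x j" if "mc \<in> I" for mc
  proof -
    have "F mc \<in> E N" "epos (F mc)" using FS[OF that] unfolding S_def by blast+
    moreover have "evertices (F mc) \<subseteq> V0 x j" using FV[OF that] SqV_V0 Ip[OF that] by blast
    ultimately show ?thesis unfolding E0_def E_def by blast
  qed
  have Finj: "inj_on F I"
  proof (rule inj_onI)
    fix a b assume a: "a \<in> I" and b: "b \<in> I" and eq: "F a = F b"
    show "a = b"
    proof (rule ccontr)
      assume ne: "a \<noteq> b"
      have "(fst a, snd a) \<noteq> (fst b, snd b)" using ne by (simp add: prod_eq_iff)
      moreover have "epos (F a)" using FS[OF a] unfolding S_def by blast
      ultimately have "F a = (x,j,True)" using SqV_inter[of "fst a" j "fst b" "snd a" "snd b" "F a" x] Ip[OF a] Ip[OF b] FV[OF a] FV[OF b] eq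
        by simp
      then show False using Fne[OF a] ue_def by simp
    qed
  qed
  have cardF: "card (F ` I) = 6" using card_image[OF Finj] cardI by simp
  have FIS: "F ` I \<subseteq> S" using FS by blast
  show ?thesis
  proof (cases "card S \<ge> 7")
    case True then show ?thesis unfolding S_def by simp
  next
    case False
    have "card S \<ge> 6" using card_mono[OF finS FIS] cardF by simp
    with False have cS: "card S = 6" by simp
    have SF: "F ` I = S" using card_subset_eq[OF finS FIS] cardF cS by simp
    have ueE: "ue \<in> E N" using E_und[OF assms(3)] ue by simp
    have "\<sigma> ue = 0"
    proof (rule ccontr)
      assume "\<sigma> ue \<noteq> 0"
      then have "ue \<in> S" using ueE unfolding S_def ue_def by simp
      then show False using SF Fne by blast
    qed
    then have se0: "\<sigma> e = 0" using sig_und[OF sig assms(3)] ue by simp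
    have SE0: "S \<subseteq> E0 x j"
    proof
      fix f assume "f \<in> S"
      then obtain mc where "mc \<in> I" "f = F mc" using SF by (metis imageE)
      then show "f \<in> E0 x j" using FE0 by simp
    qed
    have ueE0: "ue \<in> E0 x j"
    proof -
      have "I \<noteq> {}" using cardI by auto
      then obtain mc where mc: "mc \<in> I" by blast
      have "ue \<in> und ` bdry (P0 x j (fst mc) (snd mc))" using P0_e Ip[OF mc] ue_def by simp
      then have "evertices ue \<subseteq> SqV x j (fst mc) (snd mc)" using P0_vert[of "fst mc" j "snd mc" ue x] Ip[OF mc] by simp
      then have "evertices ue \<subseteq> V0 x j" using SqV_V0[of "fst mc" j "snd mc" x] Ip[OF mc] by simp
      then show ?thesis using ueE unfolding E0_def E_def ue_def by simp
    qed
    define P0' where "P0' mc = P0 x j (fst mc) (snd mc)" for mc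
    have P0T: "P0' mc \<in> T" if "mc \<in> I" for mc
    proof -
      have "(dsig n \<sigma> (pf mc) - \<sigma> e) mod n = g" using assms(5) pf_cob[OF that] by blast
      then have "dsig n \<sigma> (pf mc) = g" using se0 by (simp add: dsig_def)
      then have "dsig n \<sigma> (pp (pf mc)) \<noteq> 0" using dsig_pp[OF sig pf_E[OF that]] assms(2) by simp
      then have d: "dsig n \<sigma> (P0' mc) \<noteq> 0" using pf[OF that] P0'_def by simp
      have pl: "is_plaq (P0' mc)" using P0_plaq[OF xZ j4] Ip[OF that] unfolding P0'_def by blast
      have "pp (P0' mc) = pp (pf mc)" using pf[OF that] P0'_def P0_pp by simp
      then have "bdry (P0' mc) \<subseteq> E N" by (rule bdry_E_pp[OF _ pf_E[OF that]])
      then have "P0' mc \<in> P N" by (rule in_P[OF pl])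
      moreover have "ppos (P0' mc)" by (simp add: P0'_def P0_def sq_def)
      ultimately show ?thesis using d unfolding T_def by blast
    qed
    have exQ: "\<exists>Q. is_plaq Q \<and> ppos Q \<and> F mc \<in> und ` bdry Q \<and> (\<forall>G'\<in>und ` bdry Q. G' = F mc \<or> G' \<notin> E0 x j)"
      if "mc \<in> I" for mc
      using Q_exists[OF xZ FE0[OF that] _ j4] Fne[OF that] ue_def by simp
    define Qf where "Qf mc = (SOME Q. is_plaq Q \<and> ppos Q \<and> F mc \<in> und ` bdry Q \<and> (\<forall>G'\<in>und ` bdry Q. G' = F mc \<or> G' \<notin> E0 x j))" for mc
    have Qf: "is_plaq (Qf mc) \<and> ppos (Qf mc) \<and> F mc \<in> und ` bdry (Qf mc) \<and> (\<forall>G'\<in>und ` bdry (Qf mc). G' = F mc \<or> G' \<notin> E0 x j)"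
      if "mc \<in> I" for mc
      unfolding Qf_def by (rule someI_ex[OF exQ[OF that]])
    have QT: "Qf mc \<in> T" if "mc \<in> I" for mc
    proof -
      note q = Qf[OF that]
      have q1: "is_plaq (Qf mc)" using Qf[OF that] by (rule conjunct1)
      have q3: "F mc \<in> und ` bdry (Qf mc)" using conjunct2[OF conjunct2[OF Qf[OF that]]] by (rule conjunct1)
      have q4: "\<forall>G'\<in>und ` bdry (Qf mc). G' = F mc \<or> G' \<notin> E0 x j" using conjunct2[OF conjunct2[OF Qf[OF that]]] by (rule conjunct2)
      have "und (ff mc) \<in> und ` bdry (Qf mc)" using q3 F_def by simp
      from orient[OF q1 this] obtain q' where q': "pp q' = pp (Qf mc)" "is_plaq q'" "ff mc \<in> bdry q'" by blast
      have "bdry q' \<subseteq> E N" using cob2E[OF pf_cob[OF that] _ q'(2,3)] ff[OF that] by blast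
      then have QE: "bdry (Qf mc) \<subseteq> E N" by (rule bdry_E_pp[OF q'(1)[symmetric]])
      have QP: "Qf mc \<in> P N" using in_P[OF q1 QE] .
      obtain f0 where f0: "f0 \<in> bdry (Qf mc)" "und f0 = F mc" using q3 by (rule imageE) (rule that, auto)
      have f0E: "f0 \<in> E N" using f0 QE by blast
      have injQ: "inj_on und (bdry (Qf mc))" using inj_und[OF q1] .
      have zero: "\<sigma> f = 0" if f: "f \<in> bdry (Qf mc) - {f0}" for f
      proof -
        have fE: "f \<in> E N" using f QE by blast
        have "und f \<noteq> F mc"
        proof
          assume "und f = F mc"
          then have "und f = und f0" using f0(2) by simp
          then have "f = f0" using inj_onD[OF injQ] f f0(1) by blast
          then show False using f by blast
        qed
        moreover have "und f \<in> und ` bdry (Qf mc)" using f by blast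
        ultimately have "und f \<notin> E0 x j" using q4 by blast
        then have "und f \<notin> S" using SE0 by blast
        moreover have "und f \<in> E N" "epos (und f)" using E_und[OF fE] by (auto simp: und_def split: prod.splits)
        ultimately have "\<sigma> (und f) = 0" unfolding S_def by blast
        then show "\<sigma> f = 0" using sig_und[OF sig fE] by simp
      qed
      have fin: "finite (bdry (Qf mc))" by (cases "Qf mc") (auto simp: bdry_def)
      have "sum \<sigma> (bdry (Qf mc)) = \<sigma> f0 + sum \<sigma> (bdry (Qf mc) - {f0})"
        using sum.remove[OF fin f0(1)] by blast
      also have "sum \<sigma> (bdry (Qf mc) - {f0}) = 0" using zero by simp
      finally have "dsig n \<sigma> (Qf mc) = \<sigma> f0 mod n" by (simp add: dsig_def)
      moreover have "\<sigma> f0 \<noteq> 0" using sig_und[OF sig f0E] f0(2) FS[OF that] unfolding S_def by simp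
      moreover have "0 \<le> \<sigma> f0 \<and> \<sigma> f0 < n" using sig_range[OF sig f0E] .
      ultimately have "dsig n \<sigma> (Qf mc) \<noteq> 0" by simp
      then show ?thesis using QP q unfolding T_def by blast
    qed
    have Qinj: "inj_on Qf I"
    proof (rule inj_onI)
      fix a b assume a: "a \<in> I" and b: "b \<in> I" and eq: "Qf a = Qf b"
      have "F b \<in> und ` bdry (Qf a)" using Qf[OF b] eq by simp
      then have "F b = F a \<or> F b \<notin> E0 x j" using Qf[OF a] by blast
      then have "F b = F a" using FE0[OF b] by blast
      then show "a = b" using Finj a b unfolding inj_on_def by blast
    qed
    have P0inj: "inj_on P0' I"
    proof (rule inj_onI)
      fix a b assume a: "a \<in> I" and b: "b \<in> I" and eq: "P0' a = P0' b"
      show "a = b"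
      proof (rule ccontr)
        assume ne: "a \<noteq> b"
        have "F a \<in> und ` bdry (P0 x j (fst b) (snd b))" using FU[OF a] eq unfolding P0'_def by simp
        then have v2: "evertices (F a) \<subseteq> SqV x j (fst b) (snd b)" using P0_vert[of "fst b" j "snd b" "F a" x] Ip[OF b] by blast
        have "(fst a, snd a) \<noteq> (fst b, snd b)" using ne by (simp add: prod_eq_iff)
        moreover have "epos (F a)" using FS[OF a] unfolding S_def by blast
        ultimately have "F a = (x,j,True)" using SqV_inter[of "fst a" j "fst b" "snd a" "snd b" "F a" x] Ip[OF a] Ip[OF b] FV[OF a] v2
          by simp
        then show False using Fne[OF a] ue_def by simp
      qed
    qed
    have disj: "P0' ` I \<inter> Qf ` I = {}"
    proof (rule ccontr)
      assume "P0' ` I \<inter> Qf ` I \<noteq> {}"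
      then obtain a b where a: "a \<in> I" and b: "b \<in> I" and eq: "P0' a = Qf b" by blast
      have "ue \<in> und ` bdry (P0' a)" using P0_e[of "fst a" j "snd a" x] Ip[OF a] ue_def P0'_def by simp
      then have "ue \<in> und ` bdry (Qf b)" using eq by simp
      then have "ue = F b \<or> ue \<notin> E0 x j" using Qf[OF b] by blast
      then show False using ueE0 Fne[OF b] by auto
    qed
    have "card (P0' ` I \<union> Qf ` I) = 12"
      using card_Un_disjoint[of "P0' ` I" "Qf ` I"] disj card_image[OF P0inj] card_image[OF Qinj] cardI finI by simp
    moreover have "P0' ` I \<union> Qf ` I \<subseteq> T" using P0T QT by blast
    ultimately have "card T \<ge> 12" using card_mono[OF finT] by metis
    then show ?thesis using cS unfolding S_def T_def by simp
  qed
qed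

end
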